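(* Let $x_1,\dots,x_N\in\mathbb{R}^n$ be used directly as tokens, and consider a linear-attention layer with linear per-token maps $q_j=W_Q^\top x_j$, $k_i=W_K^\top x_i$, $v_i=W_V^\top x_i$ and outputs $o_j=\sum_{i=1}^N\langle q_j,k_i\rangle v_i$. Then, with $M=W_QW_K^\top$, $$o_j=\Big[\sum_{i=1}^N (W_V^\top x_i)x_i^\top\Big]M^\top x_j,$$ so $o_j$ is linear in $x_j$ times a quadratic function of $\{x_i\}$ and is odd under the global sign flip $x_i\mapsto -x_i$ (for all $i$ simultaneously): $o_j\mapsto -o_j$. Consequently, neither such a layer nor any finite stack of such layers (each layer's outputs serving as the next layer's tokens) can produce an output equal to a nonzero statistic that is invariant under the global flip, such as $\sum_{i=1}^N x_ix_i^\top$.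
   Context: Linear attention here means attention without softmax: the output at token $j$ is the sum over all tokens $i$ of the inner product of the query of $j$ with the key of $i$, times the value of $i$. "Pure data tokens" means there are no constant channels or extra tokens beyond the $x_i$. *)

theory Defs
  imports Complex_Main
begin

text \<open>A token sequence is X :: nat => nat => real, where X i k is the
 k-th coordinate of token x_i (relevant range i < N, k < current dimension).
 A matrix W :: nat => nat => real has entries W a b (row a, column b).
 Dimensions are explicit natural numbers, since they change from layer to layer.\<close>

type_synonym tokens = "nat \<Rightarrow> nat \<Rightarrow> real"
type_synonym rmat = "nat \<Rightarrow> nat \<Rightarrow> real"

definition mat_T_vec :: "nat \<Rightarrow> rmat \<Rightarrow> (nat \<Rightarrow> real) \<Rightarrow> nat \<Rightarrow> real" where
  "mat_T_vec n W x c = (\<Sum>a<n. W a c * x a)"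

definition inner_d :: "nat \<Rightarrow> (nat \<Rightarrow> real) \<Rightarrow> (nat \<Rightarrow> real) \<Rightarrow> real" where
  "inner_d d u v = (\<Sum>a<d. u a * v a)"

definition linattn :: "nat \<Rightarrow> nat \<Rightarrow> nat \<Rightarrow> rmat \<Rightarrow> rmat \<Rightarrow> rmat \<Rightarrow> tokens \<Rightarrow> tokens" where
  "linattn N n d WQ WK WV X j c =
     (\<Sum>i<N. inner_d d (mat_T_vec n WQ (X j)) (mat_T_vec n WK (X i)) * mat_T_vec n WV (X i) c)"

definition flip :: "tokens \<Rightarrow> tokens" where
  "flip X = (\<lambda>i k. - X i k)"

record layer =
  qk_dim :: nat
  out_dim :: nat
  WQ :: rmat
  WK :: rmat
  WV :: rmat

fun stack_out :: "nat \<Rightarrow> nat \<Rightarrow> layer list \<Rightarrow> tokens \<Rightarrow> tokens" where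
  "stack_out N n [] X = X"
| "stack_out N n (L # Ls) X =
     stack_out N (out_dim L) Ls (linattn N n (qk_dim L) (WQ L) (WK L) (WV L) X)"

fun final_dim :: "nat \<Rightarrow> layer list \<Rightarrow> nat" where
  "final_dim n [] = n"
| "final_dim n (L # Ls) = final_dim (out_dim L) Ls"

end

theory Submission
  imports Defs
begin


lemma flip_layer: "linattn N n d A B C (flip X) = flip (linattn N n d A B C X)"
  by (rule ext)+ (simp add: linattn_def flip_def mat_T_vec_def inner_d_def sum_negf sum_distrib_left sum_distrib_right)

lemma flip_stack: "stack_out N n Ls (flip X) = flip (stack_out N n Ls X)"
  by (induction Ls arbitrary: n X) (simp_all add: flip_layer)

lemma closed_form:
  "linattn N n d Q K V X j c =
     (\<Sum>k<n. (\<Sum>i<N. mat_T_vec n V (X i) c * X i k) * (\<Sum>l<n. (\<lambda>a b. \<Sum>e<d. Q a e * K b e) l k * X j l))"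
proof -
  have "linattn N n d Q K V X j c = (\<Sum>i<N. \<Sum>k<n. \<Sum>l<n. \<Sum>e<d. mat_T_vec n V (X i) c * X i k * (Q l e * K k e * X j l))"
    unfolding linattn_def inner_d_def
    apply (rule sum.cong[OF refl])
    apply (simp add: mat_T_vec_def[of n Q] mat_T_vec_def[of n K] sum_distrib_left sum_distrib_right)
    apply (subst sum.swap[where A="{..<d}"])
    apply (rule sum.cong[OF refl])
    apply (rule sum.swap[THEN trans])
    apply (rule sum.cong[OF refl])+
    by (simp add: algebra_simps)
  also have "... = (\<Sum>k<n. \<Sum>i<N. \<Sum>l<n. \<Sum>e<d. mat_T_vec n V (X i) c * X i k * (Q l e * K k e * X j l))"
    by (rule sum.swap)
  also have "... = (\<Sum>k<n. (\<Sum>i<N. mat_T_vec n V (X i) c * X i k) * (\<Sum>l<n. (\<lambda>a b. \<Sum>e<d. Q a e * K b e) l k * X j l))"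
    apply (rule sum.cong[OF refl])
    apply (simp add: sum_distrib_left sum_distrib_right)
    apply (subst (2) sum.swap)
    apply (rule sum.cong[OF refl])
    apply (subst (2) sum.swap)
    by simp
  finally show ?thesis .
qed

theorem proposition6:
  fixes N n d m :: nat and WQ WK WV :: rmat
  shows
  \<comment> \<open>(1) closed form with M = W_Q W_K^T\<close>
  "(\<forall>X j c. j < N \<longrightarrow> c < m \<longrightarrow>
      (let M = (\<lambda>a b. \<Sum>e<d. WQ a e * WK b e) in
       linattn N n d WQ WK WV X j c =
         (\<Sum>k<n. (\<Sum>i<N. mat_T_vec n WV (X i) c * X i k) * (\<Sum>l<n. M l k * X j l))))
   \<and> \<comment> \<open>(2) oddness under the global flip\<close>
   (\<forall>X j c. j < N \<longrightarrow> c < m \<longrightarrow>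
      linattn N n d WQ WK WV (flip X) j c = - linattn N n d WQ WK WV X j c)
   \<and> \<comment> \<open>(3) no nonempty finite stack outputs a nonzero flip-invariant statistic\<close>
   (\<forall>Ls j. Ls \<noteq> [] \<longrightarrow> j < N \<longrightarrow>
      \<not> (\<exists>G :: tokens \<Rightarrow> nat \<Rightarrow> real.
            (\<forall>X. G (flip X) = G X)
          \<and> (\<exists>X c. c < final_dim n Ls \<and> G X c \<noteq> 0)
          \<and> (\<forall>X c. c < final_dim n Ls \<longrightarrow> stack_out N n Ls X j c = G X c)))
   \<and> \<comment> \<open>(4) in particular not sum_i x_i x_i^T (entry (a,b) stored at coordinate a*n+b)\<close>
   (\<forall>Ls j. Ls \<noteq> [] \<longrightarrow> j < N \<longrightarrow> 0 < n \<longrightarrow>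
      \<not> (\<forall>X a b. a < n \<longrightarrow> b < n \<longrightarrow>
            stack_out N n Ls X j (a * n + b) = (\<Sum>i<N. X i a * X i b)))"
proof (intro conjI allI impI)
  fix X j c
  show "let M = (\<lambda>a b. \<Sum>e<d. WQ a e * WK b e) in
       linattn N n d WQ WK WV X j c =
         (\<Sum>k<n. (\<Sum>i<N. mat_T_vec n WV (X i) c * X i k) * (\<Sum>l<n. M l k * X j l))"
    unfolding Let_def by (rule closed_form)
next
  fix X j c
  show "linattn N n d WQ WK WV (flip X) j c = - linattn N n d WQ WK WV X j c"
    by (subst flip_layer) (simp add: flip_def)
next
  fix Ls and j :: nat
  show "\<not> (\<exists>G :: tokens \<Rightarrow> nat \<Rightarrow> real.
            (\<forall>X. G (flip X) = G X)
          \<and> (\<exists>X c. c < final_dim n Ls \<and> G X c \<noteq> 0)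
          \<and> (\<forall>X c. c < final_dim n Ls \<longrightarrow> stack_out N n Ls X j c = G X c))"
  proof
    assume "\<exists>G :: tokens \<Rightarrow> nat \<Rightarrow> real.
            (\<forall>X. G (flip X) = G X)
          \<and> (\<exists>X c. c < final_dim n Ls \<and> G X c \<noteq> 0)
          \<and> (\<forall>X c. c < final_dim n Ls \<longrightarrow> stack_out N n Ls X j c = G X c)"
    then obtain G X c where g1: "\<forall>X. G (flip X) = G X" and c: "c < final_dim n Ls" and nz: "G X c \<noteq> 0"
      and g3: "\<forall>X c. c < final_dim n Ls \<longrightarrow> stack_out N n Ls X j c = G X c" by blast
    have "G X c = stack_out N n Ls (flip X) j c" using g1 g3 c by metis
    also have "... = - stack_out N n Ls X j c" by (subst flip_stack) (simp add: flip_def)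
    also have "... = - G X c" using g3 c by simp
    finally show False using nz by simp
  qed
next
  fix Ls and j :: nat
  assume j: "j < N" and n: "0 < n"
  show "\<not> (\<forall>X a b. a < n \<longrightarrow> b < n \<longrightarrow>
            stack_out N n Ls X j (a * n + b) = (\<Sum>i<N. X i a * X i b))"
  proof
    assume h: "\<forall>X a b. a < n \<longrightarrow> b < n \<longrightarrow>
            stack_out N n Ls X j (a * n + b) = (\<Sum>i<N. X i a * X i b)"
    let ?X = "(\<lambda>i k. 1) :: tokens"
    have e: "stack_out N n Ls (flip ?X) j (0 * n + 0) = (\<Sum>i<N. flip ?X i 0 * flip ?X i 0)"
      using h n by blast
    have "(\<Sum>i<N. ?X i 0 * ?X i 0) = stack_out N n Ls (flip ?X) j (0 * n + 0)"
      by (subst e) (simp add: flip_def)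
    also have "... = - stack_out N n Ls ?X j (0 * n + 0)"
      by (subst flip_stack) (simp add: flip_def)
    also have "stack_out N n Ls ?X j (0 * n + 0) = (\<Sum>i<N. ?X i 0 * ?X i 0)"
      using h n by blast
    finally have "(\<Sum>i<N. ?X i 0 * ?X i 0) = 0" by simp
    then show False using j by simp
  qed
qed

end
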